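(* Let $f$ be a $C^1$ diffeomorphism of $M=\mathbb{R}^d/\mathbb{Z}^d$ and $x\in M$. If $\Gamma_{o(x)}$ is a bijection of $\mathcal{N}$, then $x$ is u-hyperbolic.
   Context: Tangent spaces identified with $\mathbb{R}^d$. $o(x)=(f^k(x))_{k\in\mathbb{Z}}$, $(\Gamma_{\mathbf{x}}\eta)_k=\eta_k-Df(x_{k-1})\eta_{k-1}$. $\mathcal{N}$ is the space of sequences $(\eta_k)_{k\in\mathbb{Z}}$ in $\mathbb{R}^d$ with $\limsup_{|k|\to\infty}\frac1{|k|}\log|\eta_k|\le0$. A point $x$ is u-hyperbolic if there exist subspaces $E^u(x),E^s(x)$ spanning $T_xM$ such that $\limsup_{k\to\infty}\frac1k\log|Df^{-k}(x)\eta^s|>0$ for all nonzero $\eta^s\in E^s(x)$ and $\limsup_{k\to\infty}\frac1k\log|Df^k(x)\eta^u|>0$ for all nonzero $\eta^u\in E^u(x)$. *)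

theory Defs
  imports "HOL-Analysis.Analysis"
begin

text \<open>The torus M = R^d/Z^d is represented through lifts to R^d (type real^'d).
  A vector is integral if all its coordinates are integers.\<close>
definition int_vec :: "real^'d \<Rightarrow> bool" where
  "int_vec v \<longleftrightarrow> (\<forall>i. v $ i \<in> \<int>)"

text \<open>F is a lift of a C^1 diffeomorphism f of the torus, with derivative matrix DF;
  G is the lift of f^{-1} with derivative matrix DG. Both lifts are C^1,
  mutually inverse, and respect the integer lattice (so they descend to the torus,
  where they are mutually inverse maps).\<close>
definition C1_torus_diffeo_lift ::
  "(real^'d \<Rightarrow> real^'d) \<Rightarrow> (real^'d \<Rightarrow> real^'d^'d) \<Rightarrow>
   (real^'d \<Rightarrow> real^'d) \<Rightarrow> (real^'d \<Rightarrow> real^'d^'d) \<Rightarrow> bool" where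
  "C1_torus_diffeo_lift F DF G DG \<longleftrightarrow>
     (\<forall>x. (F has_derivative (\<lambda>h. DF x *v h)) (at x)) \<and> continuous_on UNIV DF \<and>
     (\<forall>y. (G has_derivative (\<lambda>h. DG y *v h)) (at y)) \<and> continuous_on UNIV DG \<and>
     (\<forall>x. G (F x) = x) \<and> (\<forall>y. F (G y) = y) \<and>
     (\<forall>x n. int_vec n \<longrightarrow> int_vec (F (x + n) - F x)) \<and>
     (\<forall>y n. int_vec n \<longrightarrow> int_vec (G (y + n) - G y))"

definition orbit ::
  "(real^'d \<Rightarrow> real^'d) \<Rightarrow> (real^'d \<Rightarrow> real^'d) \<Rightarrow> real^'d \<Rightarrow> int \<Rightarrow> real^'d" where
  "orbit F G x k = (if 0 \<le> k then (F ^^ nat k) x else (G ^^ nat (- k)) x)"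

definition Gamma_orb ::
  "(real^'d \<Rightarrow> real^'d) \<Rightarrow> (real^'d \<Rightarrow> real^'d^'d) \<Rightarrow> (real^'d \<Rightarrow> real^'d) \<Rightarrow>
   real^'d \<Rightarrow> (int \<Rightarrow> real^'d) \<Rightarrow> int \<Rightarrow> real^'d" where
  "Gamma_orb F DF G x \<eta> k = \<eta> k - DF (orbit F G x (k - 1)) *v \<eta> (k - 1)"

text \<open>The space N: limsup_{|k|->oo} (1/|k|) log |eta_k| <= 0, with log 0 = -oo.\<close>
definition tempered_seqs :: "(int \<Rightarrow> real^'d) set" where
  "tempered_seqs = {\<eta>. Limsup (sup at_top at_bot)
      (\<lambda>k::int. if \<eta> k = 0 then -\<infinity> else ereal (ln (norm (\<eta> k)) / real_of_int \<bar>k\<bar>)) \<le> 0}"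

text \<open>Df^k(x) = Df(x_{k-1}) ... Df(x_0) and Df^{-k}(x) = D(f^{-1})(x_{-(k-1)}) ... D(f^{-1})(x_0).\<close>
primrec Dfwd :: "(real^'d \<Rightarrow> real^'d) \<Rightarrow> (real^'d \<Rightarrow> real^'d^'d) \<Rightarrow> real^'d \<Rightarrow> nat \<Rightarrow> real^'d^'d" where
  "Dfwd F DF x 0 = mat 1"
| "Dfwd F DF x (Suc k) = DF ((F ^^ k) x) ** Dfwd F DF x k"

definition upper_exp_rate :: "(nat \<Rightarrow> real^'d) \<Rightarrow> ereal" where
  "upper_exp_rate v = Limsup sequentially
      (\<lambda>k. if v k = 0 then -\<infinity> else ereal (ln (norm (v k)) / real k))"

definition u_hyperbolic ::
  "(real^'d \<Rightarrow> real^'d) \<Rightarrow> (real^'d \<Rightarrow> real^'d^'d) \<Rightarrow> (real^'d \<Rightarrow> real^'d) \<Rightarrow>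
   (real^'d \<Rightarrow> real^'d^'d) \<Rightarrow> real^'d \<Rightarrow> bool" where
  "u_hyperbolic F DF G DG x \<longleftrightarrow>
     (\<exists>Eu Es. subspace Eu \<and> subspace Es \<and> span (Eu \<union> Es) = UNIV \<and>
        (\<forall>v\<in>Es. v \<noteq> 0 \<longrightarrow> upper_exp_rate (\<lambda>k. Dfwd G DG x k *v v) > 0) \<and>
        (\<forall>v\<in>Eu. v \<noteq> 0 \<longrightarrow> upper_exp_rate (\<lambda>k. Dfwd F DF x k *v v) > 0))"

end

theory Submission imports Defs begin

lemma limsup_rate_iff:
  fixes v :: "'a \<Rightarrow> 'b::real_normed_vector"
  assumes w: "eventually (\<lambda>x. w x > 0) F"
  shows "Limsup F (\<lambda>x. if v x = 0 then -\<infinity> else ereal (ln (norm (v x)) / w x)) \<le> 0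
    \<longleftrightarrow> (\<forall>e>0. eventually (\<lambda>x. norm (v x) < exp (e * w x)) F)"
  unfolding Limsup_le_iff
proof safe
  fix e :: real assume e: "e > 0"
  assume H: "\<forall>y>0. \<forall>\<^sub>F x in F. (if v x = 0 then - \<infinity> else ereal (ln (norm (v x)) / w x)) < y"
  from H[rule_format, of "ereal e"] e
  have h1: "eventually (\<lambda>x. (if v x = 0 then - \<infinity> else ereal (ln (norm (v x)) / w x)) < ereal e) F"
    by simp
  have "eventually (\<lambda>x. (if v x = 0 then - \<infinity> else ereal (ln (norm (v x)) / w x)) < ereal e \<and> w x > 0) F"
    by (rule eventually_conj[OF h1 w])
  then show "\<forall>\<^sub>F x in F. norm (v x) < exp (e * w x)"
  proof (rule eventually_mono)
    fix x assume a: "(if v x = 0 then - \<infinity> else ereal (ln (norm (v x)) / w x)) < ereal e \<and> 0 < w x"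
    show "norm (v x) < exp (e * w x)"
    proof (cases "v x = 0")
      case True then show ?thesis by simp
    next
      case False
      with a have "ln (norm (v x)) / w x < e" by simp
      with a have "ln (norm (v x)) < e * w x" by (simp add: pos_divide_less_eq mult.commute)
      then have "exp (ln (norm (v x))) < exp (e * w x)" by simp
      with False show ?thesis by simp
    qed
  qed
next
  fix y :: ereal assume y: "y > 0"
  assume H: "\<forall>e>0. \<forall>\<^sub>F x in F. norm (v x) < exp (e * w x)"
  show "\<forall>\<^sub>F x in F. (if v x = 0 then - \<infinity> else ereal (ln (norm (v x)) / w x)) < y"
  proof (cases y)
    case (real e)
    with y have e: "e > 0" by simp
    have "eventually (\<lambda>x. norm (v x) < exp (e * w x) \<and> w x > 0) F"
      using H e w by (auto intro: eventually_conj)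
    then show ?thesis
    proof (rule eventually_mono)
      fix x assume a: "norm (v x) < exp (e * w x) \<and> 0 < w x"
      show "(if v x = 0 then - \<infinity> else ereal (ln (norm (v x)) / w x)) < y"
      proof (cases "v x = 0")
        case True then show ?thesis using real by simp
      next
        case False
        then have "ln (norm (v x)) < ln (exp (e * w x))" using a by (subst ln_less_cancel_iff) auto
        then have "ln (norm (v x)) < e * w x" by simp
        with a have "ln (norm (v x)) / w x < e" by (simp add: pos_divide_less_eq mult.commute)
        with False real show ?thesis by simp
      qed
    qed
  next
    case PInf then show ?thesis by simp
  next
    case MInf with y show ?thesis by simp
  qed
qed

lemma rate_iff:
  "upper_exp_rate v \<le> 0 \<longleftrightarrow> (\<forall>e>0. eventually (\<lambda>k. norm (v k) < exp (e * real k)) sequentially)"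
  unfolding upper_exp_rate_def
  by (rule limsup_rate_iff) (auto simp: eventually_sequentially intro: exI[of _ 1])

lemma eventually_int_sup:
  "eventually P (sup at_top at_bot :: int filter) \<longleftrightarrow>
     eventually (\<lambda>n. P (int n)) sequentially \<and> eventually (\<lambda>n. P (- int n)) sequentially"
proof -
  have 1: "eventually P (at_top :: int filter) \<longleftrightarrow> eventually (\<lambda>n. P (int n)) sequentially"
    unfolding eventually_at_top_linorder eventually_sequentially
  proof
    assume "\<exists>N. \<forall>n\<ge>N. P n" then obtain N where "\<forall>n\<ge>N. P n" by blast
    then show "\<exists>N. \<forall>n\<ge>N. P (int n)" by (intro exI[of _ "nat N"]) auto
  next
    assume "\<exists>N. \<forall>n\<ge>N. P (int n)" then obtain N where N: "\<forall>n\<ge>N. P (int n)" by blast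
    show "\<exists>N. \<forall>n\<ge>N. P n"
    proof (intro exI[of _ "int N"] allI impI)
      fix n :: int assume "n \<ge> int N"
      then show "P n" using N[rule_format, of "nat n"] by auto
    qed
  qed
  have 2: "eventually P (at_bot :: int filter) \<longleftrightarrow> eventually (\<lambda>n. P (- int n)) sequentially"
    unfolding eventually_at_bot_linorder eventually_sequentially
  proof
    assume "\<exists>N. \<forall>n\<le>N. P n" then obtain N where "\<forall>n\<le>N. P n" by blast
    then show "\<exists>M. \<forall>n\<ge>M. P (- int n)" by (intro exI[of _ "nat (- N)"]) auto
  next
    assume "\<exists>N. \<forall>n\<ge>N. P (- int n)" then obtain N where N: "\<forall>n\<ge>N. P (- int n)" by blast
    show "\<exists>M. \<forall>n\<le>M. P n"
    proof (intro exI[of _ "- int N"] allI impI)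
      fix n :: int assume "n \<le> - int N"
      then show "P n" using N[rule_format, of "nat (- n)"] by auto
    qed
  qed
  show ?thesis using 1 2 by (simp add: eventually_sup)
qed

lemma tempered_iff:
  "\<eta> \<in> tempered_seqs \<longleftrightarrow> upper_exp_rate (\<lambda>n. \<eta> (int n)) \<le> 0 \<and> upper_exp_rate (\<lambda>n. \<eta> (- int n)) \<le> 0"
proof -
  have "\<eta> \<in> tempered_seqs \<longleftrightarrow> (\<forall>e>0. eventually (\<lambda>k. norm (\<eta> k) < exp (e * real_of_int \<bar>k\<bar>)) (sup at_top at_bot))"
    unfolding tempered_seqs_def mem_Collect_eq
    by (rule limsup_rate_iff) (auto simp: eventually_int_sup eventually_sequentially intro: exI[of _ 1])
  also have "\<dots> \<longleftrightarrow> upper_exp_rate (\<lambda>n. \<eta> (int n)) \<le> 0 \<and> upper_exp_rate (\<lambda>n. \<eta> (- int n)) \<le> 0"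
    unfolding rate_iff eventually_int_sup by auto
  finally show ?thesis .
qed


lemma ev_exp: "e > 0 \<Longrightarrow> eventually (\<lambda>k. C \<le> exp (e * real k)) sequentially"
proof -
  assume e: "e > 0"
  obtain N :: nat where N: "ln (max C 1) / e < real N" using reals_Archimedean2 by blast
  show ?thesis unfolding eventually_sequentially
  proof (intro exI[of _ N] allI impI)
    fix k assume "N \<le> k"
    then have "ln (max C 1) / e < real k" using N by linarith
    then have "ln (max C 1) < e * real k" using e by (simp add: pos_divide_less_eq mult.commute)
    then have "exp (ln (max C 1)) < exp (e * real k)" by (simp only: exp_less_cancel_iff)
    moreover have "exp (ln (max C 1)) = max C 1" by simp
    ultimately show "C \<le> exp (e * real k)" by linarith
  qed
qed

lemma rate_add:
  fixes u w :: "nat \<Rightarrow> real^'d"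
  assumes "upper_exp_rate u \<le> 0" "upper_exp_rate w \<le> 0"
  shows "upper_exp_rate (\<lambda>k. u k + w k) \<le> 0"
  unfolding rate_iff
proof (intro allI impI)
  fix e :: real assume e: "e > 0"
  have "eventually (\<lambda>k. norm (u k) < exp (e/2 * real k)) sequentially"
    using assms(1) e unfolding rate_iff by (meson half_gt_zero)
  moreover have "eventually (\<lambda>k. norm (w k) < exp (e/2 * real k)) sequentially"
    using assms(2) e unfolding rate_iff by (meson half_gt_zero)
  moreover have "eventually (\<lambda>k. 2 \<le> exp (e/2 * real k)) sequentially"
    using e by (intro ev_exp) simp
  ultimately show "eventually (\<lambda>k. norm (u k + w k) < exp (e * real k)) sequentially"
  proof eventually_elim
    case (elim k)
    have "exp (e * real k) = exp (e/2 * real k) * exp (e/2 * real k)"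
      by (simp flip: exp_add)
    also have "\<dots> \<ge> 2 * exp (e/2 * real k)" using elim(3) by (intro mult_right_mono) auto
    finally have "2 * exp (e/2 * real k) \<le> exp (e * real k)" .
    moreover have "norm (u k + w k) \<le> norm (u k) + norm (w k)" by (rule norm_triangle_ineq)
    ultimately show ?case using elim(1,2) by linarith
  qed
qed

lemma rate_scale:
  fixes u :: "nat \<Rightarrow> real^'d"
  assumes "upper_exp_rate u \<le> 0"
  shows "upper_exp_rate (\<lambda>k. c *\<^sub>R u k) \<le> 0"
  unfolding rate_iff
proof (intro allI impI)
  fix e :: real assume e: "e > 0"
  have "eventually (\<lambda>k. norm (u k) < exp (e/2 * real k)) sequentially"
    using assms(1) e unfolding rate_iff by (meson half_gt_zero)
  moreover have "eventually (\<lambda>k. \<bar>c\<bar> + 1 \<le> exp (e/2 * real k)) sequentially"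
    using e by (intro ev_exp) simp
  ultimately show "eventually (\<lambda>k. norm (c *\<^sub>R u k) < exp (e * real k)) sequentially"
  proof eventually_elim
    case (elim k)
    have "exp (e * real k) = exp (e/2 * real k) * exp (e/2 * real k)"
      by (simp flip: exp_add)
    also have "\<dots> \<ge> (\<bar>c\<bar> + 1) * exp (e/2 * real k)" using elim(2) by (intro mult_right_mono) auto
    finally have a: "(\<bar>c\<bar> + 1) * exp (e/2 * real k) \<le> exp (e * real k)" .
    have "norm (c *\<^sub>R u k) = \<bar>c\<bar> * norm (u k)" by simp
    also have "\<dots> \<le> \<bar>c\<bar> * exp (e/2 * real k)" using elim(1) by (intro mult_left_mono) auto
    also have "\<dots> < (\<bar>c\<bar> + 1) * exp (e/2 * real k)" by (simp add: distrib_right)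
    finally show ?case using a by linarith
  qed
qed

lemma rate_cong:
  assumes "eventually (\<lambda>k. u k = w k) sequentially" "upper_exp_rate u \<le> 0"
  shows "upper_exp_rate w \<le> 0"
  using assms unfolding rate_iff
  by (auto elim: eventually_elim2)

lemma rate_neg: "upper_exp_rate (\<lambda>k. - u k) = upper_exp_rate (u :: nat \<Rightarrow> real^'d)"
  unfolding upper_exp_rate_def by (simp only: norm_minus_cancel neg_equal_0_iff_equal)

lemma rate_zero: "upper_exp_rate (\<lambda>k. 0 :: real^'d) \<le> 0"
  unfolding rate_iff by simp

lemma inv_mat:
  assumes "\<forall>x. (F has_derivative (\<lambda>h. DF x *v h)) (at x)"
    "\<forall>y. (G has_derivative (\<lambda>h. DG y *v h)) (at y)" "\<forall>x. G (F x) = (x :: real^'d)"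
  shows "DG (F y) ** DF y = mat 1"
proof -
  have "((G \<circ> F) has_derivative ((\<lambda>h. DG (F y) *v h) \<circ> (\<lambda>h. DF y *v h))) (at y)"
    using assms(1,2) by (intro diff_chain_at) auto
  moreover have "G \<circ> F = (\<lambda>x. x)" using assms(3) by auto
  ultimately have "((\<lambda>x. x) has_derivative ((\<lambda>h. DG (F y) *v h) \<circ> (\<lambda>h. DF y *v h))) (at y)" by simp
  then have "(\<lambda>h. DG (F y) *v h) \<circ> (\<lambda>h. DF y *v h) = (\<lambda>h. h)"
    by (rule has_derivative_unique[OF _ has_derivative_ident])
  then have "\<forall>h. (DG (F y) ** DF y) *v h = mat 1 *v h"
    by (metis comp_apply matrix_vector_mul_assoc matrix_vector_mul_lid)
  then show ?thesis using matrix_eq by blast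
qed


lemma orbit_nat: "orbit F G x (int n) = (F ^^ n) x" "orbit F G x (- int n) = (G ^^ n) x"
  unfolding orbit_def by auto

lemma orbit_succ:
  assumes "\<forall>y. F (G y) = y"
  shows "orbit F G x (k + 1) = F (orbit F G x k)"
proof (cases "k \<ge> 0")
  case True
  then have "nat (k+1) = Suc (nat k)" by simp
  then show ?thesis using True unfolding orbit_def by simp
next
  case False
  show ?thesis
  proof (cases "k = -1")
    case True then show ?thesis using assms unfolding orbit_def by simp
  next
    case False2: False
    with False have "nat (- k) = Suc (nat (- (k+1)))" "\<not> 0 \<le> k + 1" by auto
    then show ?thesis using False assms unfolding orbit_def by simp
  qed
qed

lemma orbit_pred:
  assumes "\<forall>y. F (G y) = y" "\<forall>x. G (F x) = x"
  shows "orbit F G x (k - 1) = G (orbit F G x k)"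
  using orbit_succ[where F=F and G=G, OF assms(1), of x "k - 1"] assms(2) by simp

lemma Dfwd_F: "Dfwd F DF x (Suc n) = DF (orbit F G x (int n)) ** Dfwd F DF x n"
  by (simp add: orbit_nat)

lemma Dfwd_G: "Dfwd G DG x (Suc n) = DG (orbit F G x (- int n)) ** Dfwd G DG x n"
  by (simp add: orbit_nat)

lemma both_zero:
  fixes F G :: "real^'d \<Rightarrow> real^'d" and DF DG :: "real^'d \<Rightarrow> real^'d^'d" and x :: "real^'d"
  assumes C: "C1_torus_diffeo_lift F DF G DG"
    and inj: "inj_on (Gamma_orb F DF G x) tempered_seqs"
    and r1: "upper_exp_rate (\<lambda>k. Dfwd F DF x k *v w) \<le> 0"
    and r2: "upper_exp_rate (\<lambda>k. Dfwd G DG x k *v w) \<le> 0"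
  shows "w = 0"
proof -
  have FG: "\<forall>y. F (G y) = y" and GF: "\<forall>x. G (F x) = x"
    and dF: "\<forall>x. (F has_derivative (\<lambda>h. DF x *v h)) (at x)"
    and dG: "\<forall>y. (G has_derivative (\<lambda>h. DG y *v h)) (at y)"
    using C unfolding C1_torus_diffeo_lift_def by auto
  have inv2: "DF (G y) ** DG y = mat 1" for y
    using inv_mat[OF dG dF FG] .
  define \<zeta> where "\<zeta> k = (if 0 \<le> k then Dfwd F DF x (nat k) *v w else Dfwd G DG x (nat (-k)) *v w)" for k
  have z1: "\<zeta> (int n) = Dfwd F DF x n *v w" for n unfolding \<zeta>_def by simp
  have z2: "\<zeta> (- int n) = Dfwd G DG x n *v w" for n unfolding \<zeta>_def by (cases "n = 0") (simp_all del: Dfwd.simps(2))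
  have zN: "\<zeta> \<in> tempered_seqs" unfolding tempered_iff z1 z2 using r1 r2 by simp
  have zero_N: "(\<lambda>k. 0) \<in> tempered_seqs" unfolding tempered_iff by (simp add: rate_zero)
  have G0: "Gamma_orb F DF G x (\<lambda>k. 0) = (\<lambda>k. 0)" unfolding Gamma_orb_def by simp
  have Gz: "Gamma_orb F DF G x \<zeta> = (\<lambda>k. 0)"
  proof
    fix k :: int
    have "\<zeta> k = DF (orbit F G x (k - 1)) *v \<zeta> (k - 1)"
    proof (cases "k \<ge> 1")
      case True
      then obtain n where n: "k = int (Suc n)" by (intro that[of "nat (k - 1)"]) simp
      then have "k - 1 = int n" by simp
      then show ?thesis using n z1[of "Suc n"] z1[of n] Dfwd_F[of F DF x n G]
        by (simp only: matrix_vector_mul_assoc)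
    next
      case False
      then obtain n where n: "k = - int n" by (intro that[of "nat (- k)"]) simp
      have km: "k - 1 = - int (Suc n)" using n by simp
      have zk: "\<zeta> (k - 1) = DG (orbit F G x k) *v \<zeta> k"
        using z2[of "Suc n"] z2[of n] Dfwd_G[of G DG x n F] km n
        by (simp only: matrix_vector_mul_assoc)
      have "DF (orbit F G x (k - 1)) *v \<zeta> (k - 1)
          = DF (G (orbit F G x k)) *v (DG (orbit F G x k) *v \<zeta> k)"
        unfolding orbit_pred[where F=F and G=G, OF FG GF] zk ..
      also have "\<dots> = \<zeta> k" by (simp add: matrix_vector_mul_assoc inv2)
      finally show ?thesis by simp
    qed
    then show "Gamma_orb F DF G x \<zeta> k = 0" unfolding Gamma_orb_def by simp
  qed
  have "\<zeta> = (\<lambda>k. 0)" using inj zN zero_N Gz G0 by (metis inj_on_def)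
  then have "\<zeta> 0 = 0" by simp
  then show "w = 0" using z1[of 0] by simp
qed


lemma mv_neg: "A *v (- x) = - (A *v (x::real^'n))"
  using matrix_vector_mult_diff_distrib[of A 0 x] by simp

lemma sub_rate: "subspace {w. upper_exp_rate (\<lambda>k. (A k :: real^'d^'d) *v w) \<le> 0}"
proof (rule subspaceI, unfold mem_Collect_eq)
  show "upper_exp_rate (\<lambda>k. A k *v 0) \<le> 0" using rate_zero by simp
next
  fix u w :: "real^'d"
  assume "upper_exp_rate (\<lambda>k. A k *v u) \<le> 0" "upper_exp_rate (\<lambda>k. A k *v w) \<le> 0"
  then have "upper_exp_rate (\<lambda>k. A k *v u + A k *v w) \<le> 0" by (rule rate_add)
  then show "upper_exp_rate (\<lambda>k. A k *v (u + w)) \<le> 0" by (simp only: matrix_vector_right_distrib)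
next
  fix c :: real and u :: "real^'d"
  assume "upper_exp_rate (\<lambda>k. A k *v u) \<le> 0"
  then have "upper_exp_rate (\<lambda>k. c *\<^sub>R (A k *v u)) \<le> 0" by (rule rate_scale)
  then show "upper_exp_rate (\<lambda>k. A k *v (c *\<^sub>R u)) \<le> 0" by (simp only: matrix_vector_mult_scaleR)
qed

theorem lemma3p5:
  fixes F G :: "real^'d \<Rightarrow> real^'d" and DF DG :: "real^'d \<Rightarrow> real^'d^'d" and x :: "real^'d"
  assumes "C1_torus_diffeo_lift F DF G DG"
    and "bij_betw (Gamma_orb F DF G x) tempered_seqs tempered_seqs"
  shows "u_hyperbolic F DF G DG x"
proof -
  note C = assms(1)
  have FG: "\<forall>y. F (G y) = y" and GF: "\<forall>x. G (F x) = x"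
    and dF: "\<forall>x. (F has_derivative (\<lambda>h. DF x *v h)) (at x)"
    and dG: "\<forall>y. (G has_derivative (\<lambda>h. DG y *v h)) (at y)"
    using C unfolding C1_torus_diffeo_lift_def by auto
  have inv1: "DG (F y) ** DF y = mat 1" for y
    using inv_mat[OF dF dG GF] .
  have inj: "inj_on (Gamma_orb F DF G x) tempered_seqs"
    using assms(2) by (simp add: bij_betw_def)
  have surj: "Gamma_orb F DF G x ` tempered_seqs = tempered_seqs"
    using assms(2) by (simp add: bij_betw_def)
  define Es where "Es = {w. upper_exp_rate (\<lambda>k. Dfwd F DF x k *v w) \<le> 0}"
  define Eu where "Eu = {w. upper_exp_rate (\<lambda>k. Dfwd G DG x k *v w) \<le> 0}"
  note sub = sub_rate
  have spanU: "v \<in> span (Eu \<union> Es)" for v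
  proof -
    define \<delta> where "\<delta> = (\<lambda>k::int. if k = 0 then v else 0)"
    have "\<delta> \<in> tempered_seqs"
      unfolding tempered_iff
    proof
      show "upper_exp_rate (\<lambda>n. \<delta> (int n)) \<le> 0"
        by (rule rate_cong[OF _ rate_zero]) (auto simp: \<delta>_def eventually_sequentially intro!: exI[of _ 1])
      show "upper_exp_rate (\<lambda>n. \<delta> (- int n)) \<le> 0"
        by (rule rate_cong[OF _ rate_zero]) (auto simp: \<delta>_def eventually_sequentially intro!: exI[of _ 1])
    qed
    then obtain \<eta> where \<eta>N: "\<eta> \<in> tempered_seqs" and G\<eta>: "Gamma_orb F DF G x \<eta> = \<delta>"
      using surj by (metis imageE)
    have rec: "\<eta> k = \<delta> k + DF (orbit F G x (k - 1)) *v \<eta> (k - 1)" for k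
      using fun_cong[OF G\<eta>, of k] unfolding Gamma_orb_def by (simp add: algebra_simps)
    have fwd: "\<eta> (int n) = Dfwd F DF x n *v \<eta> 0" for n
    proof (induction n)
      case 0 then show ?case by simp
    next
      case (Suc n)
      have "\<eta> (int (Suc n)) = DF (orbit F G x (int n)) *v \<eta> (int n)"
        using rec[of "int (Suc n)"] by (simp add: \<delta>_def)
      then show ?case using Suc Dfwd_F[of F DF x n G] by (simp add: matrix_vector_mul_assoc)
    qed
    define wu where "wu = v - \<eta> 0"
    have back1: "DG (orbit F G x k) *v \<eta> k = \<eta> (k - 1)" if "k \<noteq> 0" for k
    proof -
      have "\<eta> k = DF (orbit F G x (k - 1)) *v \<eta> (k - 1)" using rec[of k] that by (simp add: \<delta>_def)
      moreover have "orbit F G x k = F (orbit F G x (k - 1))"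
        using orbit_succ[where F=F and G=G, OF FG, of x "k - 1"] by simp
      ultimately show ?thesis by (simp add: matrix_vector_mul_assoc inv1)
    qed
    have bwd: "Dfwd G DG x (Suc n) *v wu = - \<eta> (- int (Suc n))" for n
    proof (induction n)
      case 0
      have "wu = - (DF (orbit F G x (0 - 1)) *v \<eta> (0 - 1))"
        using rec[of 0] unfolding wu_def by (simp add: \<delta>_def)
      moreover have "orbit F G x 0 = F (orbit F G x (0 - 1))"
        using orbit_succ[where F=F and G=G, OF FG, of x "0 - 1"] by simp
      ultimately have "DG (orbit F G x 0) *v wu = - \<eta> (0 - 1)"
        by (simp add: matrix_vector_mul_assoc inv1 mv_neg)
      then show ?case using Dfwd_G[of G DG x 0 F] by simp
    next
      case (Suc n)
      have "Dfwd G DG x (Suc (Suc n)) *v wu = DG (orbit F G x (- int (Suc n))) *v (- \<eta> (- int (Suc n)))"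
        using Dfwd_G[of G DG x "Suc n" F] Suc.IH by (simp only: matrix_vector_mul_assoc[symmetric])
      also have "\<dots> = - \<eta> (- int (Suc n) - 1)"
        using back1[of "- int (Suc n)"] by (simp add: mv_neg)
      finally show ?case by simp
    qed
    have r\<eta>: "upper_exp_rate (\<lambda>n. \<eta> (int n)) \<le> 0" "upper_exp_rate (\<lambda>n. \<eta> (- int n)) \<le> 0"
      using \<eta>N unfolding tempered_iff by auto
    have "(\<lambda>k. Dfwd F DF x k *v \<eta> 0) = (\<lambda>n. \<eta> (int n))" by (simp add: fwd)
    then have "\<eta> 0 \<in> Es" unfolding Es_def mem_Collect_eq using r\<eta>(1) by (simp only:)
    have eqn: "upper_exp_rate (\<lambda>n. - \<eta> (- int n)) = upper_exp_rate (\<lambda>n. \<eta> (- int n))"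
      by (rule rate_neg[of "\<lambda>n. \<eta> (- int n)"])
    have neg: "upper_exp_rate (\<lambda>n. - \<eta> (- int n)) \<le> 0" unfolding eqn by (rule r\<eta>(2))
    have ev: "eventually (\<lambda>k. (- \<eta> (- int k)) = Dfwd G DG x k *v wu) sequentially"
      unfolding eventually_sequentially
    proof (intro exI[of _ 1] allI impI)
      fix n :: nat assume "1 \<le> n"
      define m where "m = n - 1"
      have nm: "n = Suc m" using \<open>1 \<le> n\<close> unfolding m_def by simp
      show "- \<eta> (- int n) = Dfwd G DG x n *v wu" unfolding nm by (rule sym, rule bwd)
    qed
    have "upper_exp_rate (\<lambda>k. Dfwd G DG x k *v wu) \<le> 0" by (rule rate_cong[OF ev neg])
    then have "wu \<in> Eu" unfolding Eu_def mem_Collect_eq .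
    then have s2: "wu \<in> span (Eu \<union> Es)" by (intro span_base) blast
    have s1: "\<eta> 0 \<in> span (Eu \<union> Es)" using \<open>\<eta> 0 \<in> Es\<close> by (intro span_base) blast
    have "\<eta> 0 + wu \<in> span (Eu \<union> Es)" by (rule span_add[OF s1 s2])
    then show ?thesis by (simp add: wu_def)
  qed
  have h1: "subspace Eu" unfolding Eu_def by (rule sub)
  have h2: "subspace Es" unfolding Es_def by (rule sub)
  have h3: "span (Eu \<union> Es) = UNIV" using spanU by auto
  have h4: "\<forall>w\<in>Es. w \<noteq> 0 \<longrightarrow> 0 < upper_exp_rate (\<lambda>k. Dfwd G DG x k *v w)"
  proof (intro ballI impI)
    fix w assume "w \<in> Es" "w \<noteq> 0"
    then show "0 < upper_exp_rate (\<lambda>k. Dfwd G DG x k *v w)"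
      using both_zero[OF C inj, of w] unfolding Es_def by force
  qed
  have h5: "\<forall>w\<in>Eu. w \<noteq> 0 \<longrightarrow> 0 < upper_exp_rate (\<lambda>k. Dfwd F DF x k *v w)"
  proof (intro ballI impI)
    fix w assume "w \<in> Eu" "w \<noteq> 0"
    then show "0 < upper_exp_rate (\<lambda>k. Dfwd F DF x k *v w)"
      using both_zero[OF C inj, of w] unfolding Eu_def by force
  qed
  show ?thesis unfolding u_hyperbolic_def using h1 h2 h3 h4 h5 by blast
qed

end
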